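(* Let $(h,n)=(3,3)$ and $p\in\mathcal P$. Then: (i) the following are equivalent: (a) the three alternatives ranked first by the three individuals are pairwise distinct and the three alternatives ranked third are pairwise distinct; (b) $\Gamma_2(p)$ is a $3$-cycle. Moreover, if one of these conditions holds, the arc set of $\Gamma_3(p)$ is empty. (ii) $\mu(p)=\mu(p^r)$.
   Context: Here $N=\{1,2,3\}$, $H=\{1,2,3\}$, $\mathcal P$ the set of triples of linear orders on $N$, $p^r$ the profile obtained by reversing each order; $x>_{p_i}y$ means $x\neq y$ and $p_i$ ranks $x$ above $y$; for $\mu\in\{2,3\}$, $x>^p_\mu y$ means $|\{i: x>_{p_i}y\}|\ge\mu$, $\Gamma_\mu(p)$ is the directed graph $(N,\{(x,y): x>^p_\mu y\})$, $D_\mu(p)=\{x\in N: \forall y,\ |\{i: y>_{p_i}x\}|<\mu\}$, and $\mu(p)=\min\{\mu\in\{2,3\}: D_\mu(p)\ne\varnothing\}$. A $3$-cycle is a directed graph on three vertices $x_1,x_2,x_3$ whose arc set is exactly $\{(x_1,x_2),(x_2,x_3),(x_3,x_1)\}$. *)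

theory Defs
  imports Main
begin

text \<open>A linear order on N is a relation R with (x,y) \<in> R meaning "x is ranked weakly above y".\<close>

definition Alts :: "nat set" where "Alts = {1,2,3}"
definition Inds :: "nat set" where "Inds = {1,2,3}"

type_synonym profile = "nat \<Rightarrow> (nat \<times> nat) set"

definition is_profile :: "profile \<Rightarrow> bool" where
  "is_profile p \<longleftrightarrow> (\<forall>i\<in>Inds. linear_order_on Alts (p i))"

definition rev_profile :: "profile \<Rightarrow> profile" where
  "rev_profile p = (\<lambda>i. converse (p i))"

definition pref :: "(nat \<times> nat) set \<Rightarrow> nat \<Rightarrow> nat \<Rightarrow> bool" where
  "pref R x y \<longleftrightarrow> x \<noteq> y \<and> (x, y) \<in> R"

definition is_first :: "profile \<Rightarrow> nat \<Rightarrow> nat \<Rightarrow> bool" where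
  "is_first p i x \<longleftrightarrow> x \<in> Alts \<and> (\<forall>y\<in>Alts. y \<noteq> x \<longrightarrow> pref (p i) x y)"

definition is_third :: "profile \<Rightarrow> nat \<Rightarrow> nat \<Rightarrow> bool" where
  "is_third p i x \<longleftrightarrow> x \<in> Alts \<and> (\<forall>y\<in>Alts. y \<noteq> x \<longrightarrow> pref (p i) y x)"

definition maj :: "profile \<Rightarrow> nat \<Rightarrow> nat \<Rightarrow> nat \<Rightarrow> bool" where
  "maj p \<mu> x y \<longleftrightarrow> card {i \<in> Inds. pref (p i) x y} \<ge> \<mu>"

definition Gamma_arcs :: "nat \<Rightarrow> profile \<Rightarrow> (nat \<times> nat) set" where
  "Gamma_arcs \<mu> p = {(x, y). x \<in> Alts \<and> y \<in> Alts \<and> maj p \<mu> x y}"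

definition is_3cycle :: "'a set \<Rightarrow> ('a \<times> 'a) set \<Rightarrow> bool" where
  "is_3cycle V E \<longleftrightarrow> (\<exists>x1 x2 x3. distinct [x1, x2, x3] \<and> V = {x1, x2, x3} \<and>
      E = {(x1, x2), (x2, x3), (x3, x1)})"

definition D :: "nat \<Rightarrow> profile \<Rightarrow> nat set" where
  "D \<mu> p = {x \<in> Alts. \<forall>y\<in>Alts. card {i \<in> Inds. pref (p i) y x} < \<mu>}"

definition mu :: "profile \<Rightarrow> nat" where
  "mu p = Min {m \<in> {2, 3}. D m p \<noteq> {}}"

end

theory Submission
  imports Defs
begin

definition "cyc1 = {(1::nat,2::nat),(2,3),(3,1)}"
definition "cyc2 = {(1::nat,3::nat),(3,2),(2,1)}"
lemma cyc_char: "is_3cycle {1,2,3::nat} E \<longleftrightarrow> E = cyc1 \<or> E = cyc2"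
  unfolding is_3cycle_def cyc1_def cyc2_def
proof
  assume "\<exists>x1 x2 x3. distinct [x1, x2, x3] \<and> {1,2,3::nat} = {x1, x2, x3} \<and> E = {(x1, x2), (x2, x3), (x3, x1)}"
  then obtain x1 x2 x3 where h: "distinct [x1, x2, x3]" "{1,2,3::nat} = {x1, x2, x3}" "E = {(x1, x2), (x2, x3), (x3, x1)}" by blast
  have "x1 = 1 \<or> x1 = 2 \<or> x1 = 3" "x2 = 1 \<or> x2 = 2 \<or> x2 = 3" "x3 = 1 \<or> x3 = 2 \<or> x3 = 3" using h(2) by blast+
  then show "E = {(1, 2), (2, 3), (3, 1)} \<or> E = {(1, 3), (3, 2), (2, 1)}"
    using h(1) h(3) by (elim disjE) (simp_all add: insert_commute)
next
  assume "E = {(1::nat, 2::nat), (2, 3), (3, 1)} \<or> E = {(1, 3), (3, 2), (2, 1)}"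
  then show "\<exists>x1 x2 x3. distinct [x1, x2, x3] \<and> {1, 2, 3::nat} = {x1, x2, x3} \<and> E = {(x1, x2), (x2, x3), (x3, x1)}"
    apply (elim disjE)
     apply (rule exI[of _ 1], rule exI[of _ 2], rule exI[of _ 3], simp)
    apply (rule exI[of _ 1], rule exI[of _ 3], rule exI[of _ 2], simp add: insert_commute)
    done
qed

lemma card_Inds: "card {i\<in>Inds. P i} = of_bool (P 1) + of_bool (P 2) + of_bool (P 3)"
proof -
  have "{i\<in>Inds. P i} = (if P 1 then {1} else {}) \<union> (if P 2 then {2} else {}) \<union> (if P 3 then {3::nat} else {})"
    by (auto simp: Inds_def)
  then show ?thesis by (simp add: card_Un_disjoint)
qed

lemma set_eq_bounded: "E \<subseteq> Alts \<times> Alts \<Longrightarrow> F \<subseteq> Alts \<times> Alts \<Longrightarrow> E = F \<longleftrightarrow> (\<forall>x\<in>Alts. \<forall>y\<in>Alts. (x,y)\<in>E \<longleftrightarrow> (x,y)\<in>F)"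
  by auto

lemma cyc3: "is_3cycle Alts (Gamma_arcs 2 p) \<longleftrightarrow>
   (\<forall>x\<in>Alts. \<forall>y\<in>Alts. maj p 2 x y \<longleftrightarrow> (x,y)\<in>cyc1) \<or> (\<forall>x\<in>Alts. \<forall>y\<in>Alts. maj p 2 x y \<longleftrightarrow> (x,y)\<in>cyc2)"
proof -
  have s: "Gamma_arcs 2 p \<subseteq> Alts \<times> Alts" "cyc1 \<subseteq> Alts \<times> Alts" "cyc2 \<subseteq> Alts \<times> Alts"
    by (auto simp: Gamma_arcs_def cyc1_def cyc2_def Alts_def)
  show ?thesis
    unfolding cyc_char[folded Alts_def] set_eq_bounded[OF s(1,2)] set_eq_bounded[OF s(1,3)]
    by (simp add: Gamma_arcs_def)
qed

lemma g3: "Gamma_arcs 3 p = {} \<longleftrightarrow> (\<forall>x\<in>Alts. \<forall>y\<in>Alts. \<not> maj p 3 x y)"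
  by (auto simp: Gamma_arcs_def)

lemma Dne: "D m p \<noteq> {} \<longleftrightarrow> (\<exists>x\<in>Alts. \<forall>y\<in>Alts. card {i \<in> Inds. pref (p i) y x} < m)"
  by (auto simp: D_def)

lemma mu_eq: "mu p = (if D 2 p \<noteq> {} then 2 else if D 3 p \<noteq> {} then 3 else Min {})"
proof -
  have "{m \<in> {2, 3}. D m p \<noteq> {}} = (if D 2 p \<noteq> {} then {2} else {}) \<union> (if D 3 p \<noteq> {} then {3::nat} else {})"
    by auto
  then show ?thesis by (auto simp: mu_def)
qed

lemma first_eq: "(\<forall>x. \<not> (is_first p i x \<and> is_first p j x)) \<longleftrightarrow> (\<forall>x\<in>Alts. \<not> (is_first p i x \<and> is_first p j x))"
  by (auto simp: is_first_def)
lemma third_eq: "(\<forall>x. \<not> (is_third p i x \<and> is_third p j x)) \<longleftrightarrow> (\<forall>x\<in>Alts. \<not> (is_third p i x \<and> is_third p j x))"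
  by (auto simp: is_third_def)

definition "LO a b c = {(a,a),(b,b),(c,c),(a,b),(a,c),(b,c::nat)}"

lemma lin: "linear_order_on Alts R \<Longrightarrow>
  R = LO 1 2 3 \<or> R = LO 1 3 2 \<or> R = LO 2 1 3 \<or> R = LO 2 3 1 \<or> R = LO 3 1 2 \<or> R = LO 3 2 1"
proof -
  assume a: "linear_order_on Alts R"
  have sub: "R \<subseteq> Alts \<times> Alts" and rf: "\<And>x. x \<in> Alts \<Longrightarrow> (x,x) \<in> R"
    using a by (auto simp: linear_order_on_def partial_order_on_def preorder_on_def refl_on_def)
  have tr: "trans R" and an: "antisym R" and tot: "total_on Alts R"
    using a by (auto simp: linear_order_on_def partial_order_on_def preorder_on_def)
  have tot': "\<And>x y. x \<in> Alts \<Longrightarrow> y \<in> Alts \<Longrightarrow> x \<noteq> y \<Longrightarrow> (x,y) \<in> R \<or> (y,x) \<in> R"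
    using tot unfolding total_on_def by blast
  have an': "\<And>x y. (x,y) \<in> R \<Longrightarrow> (y,x) \<in> R \<Longrightarrow> x = y"
    using an unfolding antisym_def by blast
  have al: "1 \<in> Alts" "2 \<in> Alts" "3 \<in> Alts" by (auto simp: Alts_def)
  have m: "(2,1) \<in> R \<longleftrightarrow> (1,2) \<notin> R" "(3,1) \<in> R \<longleftrightarrow> (1,3) \<notin> R" "(3,2) \<in> R \<longleftrightarrow> (2,3) \<notin> R"
    using tot'[OF al(1) al(2)] tot'[OF al(1) al(3)] tot'[OF al(2) al(3)]
      an'[of 1 2] an'[of 1 3] an'[of 2 3] by auto
  have r: "(1,1) \<in> R" "(2,2) \<in> R" "(3,3) \<in> R" using rf al by auto
  have t1: "(1,2) \<in> R \<Longrightarrow> (2,3) \<in> R \<Longrightarrow> (1,3) \<in> R"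
    using tr by (meson transD)
  have t2: "(1,3) \<notin> R \<Longrightarrow> (1,2) \<in> R \<Longrightarrow> (2,3) \<notin> R"
    using t1 by blast
  have t3: "(1,2) \<notin> R \<Longrightarrow> (2,3) \<notin> R \<Longrightarrow> (1,3) \<notin> R"
  proof -
    assume "(1,2) \<notin> R" "(2,3) \<notin> R"
    then have "(3,2) \<in> R" "(2,1) \<in> R" using m by auto
    then have "(3,1) \<in> R" using tr by (meson transD)
    then show "(1,3) \<notin> R" using m by auto
  qed
  have t4: "(1,2) \<notin> R \<Longrightarrow> (1,3) \<in> R \<Longrightarrow> (2,3) \<in> R"
    using t3 by blast
  have lsub: "\<And>a b c. a \<in> Alts \<Longrightarrow> b \<in> Alts \<Longrightarrow> c \<in> Alts \<Longrightarrow> LO a b c \<subseteq> Alts \<times> Alts"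
    by (auto simp: LO_def)
  note eqs = set_eq_bounded[OF sub lsub[OF al(1) al(2) al(3)]] set_eq_bounded[OF sub lsub[OF al(1) al(3) al(2)]]
    set_eq_bounded[OF sub lsub[OF al(2) al(1) al(3)]] set_eq_bounded[OF sub lsub[OF al(2) al(3) al(1)]]
    set_eq_bounded[OF sub lsub[OF al(3) al(1) al(2)]] set_eq_bounded[OF sub lsub[OF al(3) al(2) al(1)]]
  have E: "R = LO a b c" if "a \<in> Alts" "b \<in> Alts" "c \<in> Alts"
     "\<forall>x\<in>Alts. \<forall>y\<in>Alts. (x,y) \<in> R \<longleftrightarrow> (x,y) \<in> LO a b c" for a b c
    using set_eq_bounded[OF sub lsub[OF that(1-3)]] that(4) by blast
  show ?thesis
  proof (cases "(1,2)\<in>R"; cases "(1,3)\<in>R"; cases "(2,3)\<in>R")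
    assume "(1,2)\<in>R" "(1,3)\<in>R" "(2,3)\<in>R"
    then have "R = LO 1 2 3" by (intro E al) (simp add: Alts_def LO_def m r m[unfolded One_nat_def] r[unfolded One_nat_def])
    then show ?thesis by simp
  next
    assume "(1,2)\<in>R" "(1,3)\<in>R" "(2,3)\<notin>R"
    then have "R = LO 1 3 2" by (intro E al) (simp add: Alts_def LO_def m r m[unfolded One_nat_def] r[unfolded One_nat_def])
    then show ?thesis by simp
  next
    assume "(1,2)\<in>R" "(1,3)\<notin>R" "(2,3)\<in>R"
    then show ?thesis using t1 by simp
  next
    assume "(1,2)\<in>R" "(1,3)\<notin>R" "(2,3)\<notin>R"
    then have "R = LO 3 1 2" by (intro E al) (simp add: Alts_def LO_def m r m[unfolded One_nat_def] r[unfolded One_nat_def])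
    then show ?thesis by simp
  next
    assume "(1,2)\<notin>R" "(1,3)\<in>R" "(2,3)\<in>R"
    then have "R = LO 2 1 3" by (intro E al) (simp add: Alts_def LO_def m r m[unfolded One_nat_def] r[unfolded One_nat_def])
    then show ?thesis by simp
  next
    assume "(1,2)\<notin>R" "(1,3)\<in>R" "(2,3)\<notin>R"
    then show ?thesis using t4 by simp
  next
    assume "(1,2)\<notin>R" "(1,3)\<notin>R" "(2,3)\<in>R"
    then have "R = LO 2 3 1" by (intro E al) (simp add: Alts_def LO_def m r m[unfolded One_nat_def] r[unfolded One_nat_def])
    then show ?thesis by simp
  next
    assume "(1,2)\<notin>R" "(1,3)\<notin>R" "(2,3)\<notin>R"
    then have "R = LO 3 2 1" by (intro E al) (simp add: Alts_def LO_def m r m[unfolded One_nat_def] r[unfolded One_nat_def])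
    then show ?thesis by simp
  qed
qed


lemma pref_rev: "pref (rev_profile p i) x y = pref (p i) y x"
  by (auto simp: rev_profile_def pref_def)

lemma pref_LO: "pref (LO a b c) x y \<longleftrightarrow> x \<noteq> y \<and> (x,y) \<in> LO a b c"
  by (simp add: pref_def)


lemma prefT:
  "pref (LO 1 2 3) 1 2 = True"
  "pref (LO 1 2 3) 1 3 = True"
  "pref (LO 1 2 3) 2 1 = False"
  "pref (LO 1 2 3) 2 3 = True"
  "pref (LO 1 2 3) 3 1 = False"
  "pref (LO 1 2 3) 3 2 = False"
  "pref (LO 1 3 2) 1 2 = True"
  "pref (LO 1 3 2) 1 3 = True"
  "pref (LO 1 3 2) 2 1 = False"
  "pref (LO 1 3 2) 2 3 = False"
  "pref (LO 1 3 2) 3 1 = False"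
  "pref (LO 1 3 2) 3 2 = True"
  "pref (LO 2 1 3) 1 2 = False"
  "pref (LO 2 1 3) 1 3 = True"
  "pref (LO 2 1 3) 2 1 = True"
  "pref (LO 2 1 3) 2 3 = True"
  "pref (LO 2 1 3) 3 1 = False"
  "pref (LO 2 1 3) 3 2 = False"
  "pref (LO 2 3 1) 1 2 = False"
  "pref (LO 2 3 1) 1 3 = False"
  "pref (LO 2 3 1) 2 1 = True"
  "pref (LO 2 3 1) 2 3 = True"
  "pref (LO 2 3 1) 3 1 = True"
  "pref (LO 2 3 1) 3 2 = False"
  "pref (LO 3 1 2) 1 2 = True"
  "pref (LO 3 1 2) 1 3 = False"
  "pref (LO 3 1 2) 2 1 = False"
  "pref (LO 3 1 2) 2 3 = False"
  "pref (LO 3 1 2) 3 1 = True"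
  "pref (LO 3 1 2) 3 2 = True"
  "pref (LO 3 2 1) 1 2 = False"
  "pref (LO 3 2 1) 1 3 = False"
  "pref (LO 3 2 1) 2 1 = True"
  "pref (LO 3 2 1) 2 3 = False"
  "pref (LO 3 2 1) 3 1 = True"
  "pref (LO 3 2 1) 3 2 = True"
  by (simp_all add: pref_def LO_def)

lemma pref_irr: "pref R x x = False" by (simp add: pref_def)


lemma ballA: "(\<forall>x\<in>Alts. Q x) \<longleftrightarrow> Q 1 \<and> Q 2 \<and> Q 3" by (auto simp: Alts_def)
lemma bexA: "(\<exists>x\<in>Alts. Q x) \<longleftrightarrow> Q 1 \<or> Q 2 \<or> Q 3" by (auto simp: Alts_def)
lemma ballI3: "(\<forall>x\<in>Inds. Q x) \<longleftrightarrow> Q 1 \<and> Q 2 \<and> Q 3" by (auto simp: Inds_def)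
lemma memA: "(1::nat) \<in> Alts = True" "(2::nat) \<in> Alts = True" "(3::nat) \<in> Alts = True" by (auto simp: Alts_def)
lemma neq: "((1::nat) = 2) = False" "((1::nat) = 3) = False" "((2::nat) = 1) = False"
  "((2::nat) = 3) = False" "((3::nat) = 1) = False" "((3::nat) = 2) = False" by simp_all
lemma cycmem:
  "((1::nat),(1::nat)) \<in> cyc1 = False"
  "((1::nat),(2::nat)) \<in> cyc1 = True"
  "((1::nat),(3::nat)) \<in> cyc1 = False"
  "((2::nat),(1::nat)) \<in> cyc1 = False"
  "((2::nat),(2::nat)) \<in> cyc1 = False"
  "((2::nat),(3::nat)) \<in> cyc1 = True"
  "((3::nat),(1::nat)) \<in> cyc1 = True"
  "((3::nat),(2::nat)) \<in> cyc1 = False"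
  "((3::nat),(3::nat)) \<in> cyc1 = False"
  "((1::nat),(1::nat)) \<in> cyc2 = False"
  "((1::nat),(2::nat)) \<in> cyc2 = False"
  "((1::nat),(3::nat)) \<in> cyc2 = True"
  "((2::nat),(1::nat)) \<in> cyc2 = True"
  "((2::nat),(2::nat)) \<in> cyc2 = False"
  "((2::nat),(3::nat)) \<in> cyc2 = False"
  "((3::nat),(1::nat)) \<in> cyc2 = False"
  "((3::nat),(2::nat)) \<in> cyc2 = True"
  "((3::nat),(3::nat)) \<in> cyc2 = False"
  by (simp_all add: cyc1_def cyc2_def)

theorem lemma8:
  assumes "is_profile p"
  shows "(((\<forall>i\<in>Inds. \<forall>j\<in>Inds. i \<noteq> j \<longrightarrow> (\<forall>x. \<not> (is_first p i x \<and> is_first p j x))) \<and>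
          (\<forall>i\<in>Inds. \<forall>j\<in>Inds. i \<noteq> j \<longrightarrow> (\<forall>x. \<not> (is_third p i x \<and> is_third p j x))))
         \<longleftrightarrow> is_3cycle Alts (Gamma_arcs 2 p))
     \<and> (is_3cycle Alts (Gamma_arcs 2 p) \<longrightarrow> Gamma_arcs 3 p = {})
     \<and> mu p = mu (rev_profile p)"
proof -
  have l: "p 1 = LO 1 2 3 \<or> p 1 = LO 1 3 2 \<or> p 1 = LO 2 1 3 \<or> p 1 = LO 2 3 1 \<or> p 1 = LO 3 1 2 \<or> p 1 = LO 3 2 1"
          "p 2 = LO 1 2 3 \<or> p 2 = LO 1 3 2 \<or> p 2 = LO 2 1 3 \<or> p 2 = LO 2 3 1 \<or> p 2 = LO 3 1 2 \<or> p 2 = LO 3 2 1"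
          "p 3 = LO 1 2 3 \<or> p 3 = LO 1 3 2 \<or> p 3 = LO 2 1 3 \<or> p 3 = LO 2 3 1 \<or> p 3 = LO 3 1 2 \<or> p 3 = LO 3 2 1"
    using assms lin unfolding is_profile_def Inds_def by auto
  show ?thesis
    unfolding first_eq third_eq
    unfolding cyc3 g3 mu_eq Dne maj_def card_Inds pref_rev is_first_def is_third_def
    apply (simp only: ballA bexA ballI3 memA neq cycmem simp_thms pref_irr)
    using l apply (elim disjE)
    apply (simp_all only: prefT)
    apply simp_all
    done
qed
end
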